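(* Let $U=U_1\times\cdots\times U_m\subset\mathbb{R}^m_+$ (each $U_i\subseteq\mathbb{R}$) be a convex set, $C\subseteq\mathbb{R}^m$, $\overline{U}=U\cap C$. Let $\rho_{\rm adapt}=\rho(\Pi(\overline{U}^\downarrow),\overline{U}^\downarrow)$, $\rho_{\rm aro}=\rho(U^\downarrow,\overline{U}^\downarrow)$ and $\gamma_{\rm ro}=\gamma(U^\downarrow,\Pi(\overline{U}^\downarrow))$. Then $$\rho_{\rm adapt}\ge\frac{\rho_{\rm aro}}{\gamma_{\rm ro}}.$$
   Context: For $S\subseteq\mathbb{R}^m_+$, $S^\downarrow=\{t\in\mathbb{R}^m_+:\exists s\in S,\ t\le s\text{ componentwise}\}$. $\Pi_i(S)$ is the projection of $S$ onto coordinate $i$ and $\Pi(S)=\Pi_1(S)\times\cdots\times\Pi_m(S)$. For $r\ge0$, $rS=\{rx:x\in S\}$; $\rho(S_1,S_2)=\max\{\rho\ge0:\rho S_1\subseteq S_2\}$, $\gamma(S_1,S_2)=\min\{\gamma\ge0:S_2\subseteq\gamma S_1\}$. *)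

theory Defs
  imports "HOL-Analysis.Analysis"
begin

definition nonneg_orthant :: "(real^'m) set" where
  "nonneg_orthant = {x. \<forall>i. 0 \<le> x$i}"

definition down :: "(real^'m) set \<Rightarrow> (real^'m) set" where
  "down S = {t. (\<forall>i. 0 \<le> t$i) \<and> (\<exists>s\<in>S. \<forall>i. t$i \<le> s$i)}"

definition proj :: "'m \<Rightarrow> (real^'m) set \<Rightarrow> real set" where
  "proj i S = (\<lambda>x. x$i) ` S"

definition Proj :: "(real^'m) set \<Rightarrow> (real^'m) set" where
  "Proj S = {x. \<forall>i. x$i \<in> proj i S}"

definition rho :: "(real^'m) set \<Rightarrow> (real^'m) set \<Rightarrow> real" where
  "rho S1 S2 = (GREATEST r. r \<ge> 0 \<and> (\<lambda>x. r *\<^sub>R x) ` S1 \<subseteq> S2)"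

definition gamma :: "(real^'m) set \<Rightarrow> (real^'m) set \<Rightarrow> real" where
  "gamma S1 S2 = (LEAST g. g \<ge> 0 \<and> S2 \<subseteq> (\<lambda>x. g *\<^sub>R x) ` S1)"

text \<open>Well-definedness (the max / min in the definitions is attained).\<close>
definition rho_exists :: "(real^'m) set \<Rightarrow> (real^'m) set \<Rightarrow> bool" where
  "rho_exists S1 S2 = (\<exists>r. r \<ge> 0 \<and> (\<lambda>x. r *\<^sub>R x) ` S1 \<subseteq> S2 \<and>
      (\<forall>r'. r' \<ge> 0 \<and> (\<lambda>x. r' *\<^sub>R x) ` S1 \<subseteq> S2 \<longrightarrow> r' \<le> r))"

definition gamma_exists :: "(real^'m) set \<Rightarrow> (real^'m) set \<Rightarrow> bool" where
  "gamma_exists S1 S2 = (\<exists>g. g \<ge> 0 \<and> S2 \<subseteq> (\<lambda>x. g *\<^sub>R x) ` S1 \<and>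
      (\<forall>g'. g' \<ge> 0 \<and> S2 \<subseteq> (\<lambda>x. g' *\<^sub>R x) ` S1 \<longrightarrow> g \<le> g'))"

end

theory Submission
  imports Defs
begin

lemma rho_eq:
  assumes "r \<ge> 0" "(\<lambda>x. r *\<^sub>R x) ` S1 \<subseteq> S2"
    "\<forall>r'. r' \<ge> 0 \<and> (\<lambda>x. r' *\<^sub>R x) ` S1 \<subseteq> S2 \<longrightarrow> r' \<le> r"
  shows "rho S1 S2 = r"
  unfolding rho_def by (rule Greatest_equality) (use assms in auto)

lemma gamma_eq:
  assumes "g \<ge> 0" "S2 \<subseteq> (\<lambda>x. g *\<^sub>R x) ` S1"
    "\<forall>g'. g' \<ge> 0 \<and> S2 \<subseteq> (\<lambda>x. g' *\<^sub>R x) ` S1 \<longrightarrow> g \<le> g'"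
  shows "gamma S1 S2 = g"
  unfolding gamma_def by (rule Least_equality) (use assms in auto)

theorem lemma4:
  fixes U C :: "(real^'m) set" and Ui :: "'m \<Rightarrow> real set"
  assumes U_prod: "U = {x. \<forall>i. x$i \<in> Ui i}"
    and U_convex: "convex U"
    and U_nonneg: "U \<subseteq> nonneg_orthant"
    and ex_adapt: "rho_exists (Proj (down (U \<inter> C))) (down (U \<inter> C))"
    and ex_aro: "rho_exists (down U) (down (U \<inter> C))"
    and ex_ro: "gamma_exists (down U) (Proj (down (U \<inter> C)))"
  shows "rho (Proj (down (U \<inter> C))) (down (U \<inter> C))
           \<ge> rho (down U) (down (U \<inter> C)) / gamma (down U) (Proj (down (U \<inter> C)))"
proof -
  define D where "D = down (U \<inter> C)"
  define P where "P = Proj D"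
  define DU where "DU = down U"
  obtain b where b: "b \<ge> 0" "(\<lambda>x. b *\<^sub>R x) ` P \<subseteq> D"
    "\<forall>r'. r' \<ge> 0 \<and> (\<lambda>x. r' *\<^sub>R x) ` P \<subseteq> D \<longrightarrow> r' \<le> b"
    using ex_adapt unfolding rho_exists_def P_def D_def by blast
  obtain a where a: "a \<ge> 0" "(\<lambda>x. a *\<^sub>R x) ` DU \<subseteq> D"
    "\<forall>r'. r' \<ge> 0 \<and> (\<lambda>x. r' *\<^sub>R x) ` DU \<subseteq> D \<longrightarrow> r' \<le> a"
    using ex_aro unfolding rho_exists_def DU_def D_def by blast
  obtain g where g: "g \<ge> 0" "P \<subseteq> (\<lambda>x. g *\<^sub>R x) ` DU"
    "\<forall>g'. g' \<ge> 0 \<and> P \<subseteq> (\<lambda>x. g' *\<^sub>R x) ` DU \<longrightarrow> g \<le> g'"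
    using ex_ro unfolding gamma_exists_def P_def D_def DU_def by blast
  have eb: "rho P D = b" by (rule rho_eq[OF b])
  have ea: "rho DU D = a" by (rule rho_eq[OF a])
  have eg: "gamma DU P = g" by (rule gamma_eq[OF g])
  have "a / g \<le> b"
  proof (cases "g = 0")
    case True then show ?thesis using b(1) by simp
  next
    case False
    have "(\<lambda>x. (a / g) *\<^sub>R x) ` P \<subseteq> D"
    proof
      fix z assume "z \<in> (\<lambda>x. (a / g) *\<^sub>R x) ` P"
      then obtain x where x: "x \<in> P" "z = (a / g) *\<^sub>R x" by blast
      then obtain y where y: "y \<in> DU" "x = g *\<^sub>R y" using g(2) by blast
      have "z = a *\<^sub>R y" using x(2) y(2) False by simp
      then show "z \<in> D" using a(2) y(1) by blast
    qed
    then show ?thesis using b(3) a(1) g(1) by simp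
  qed
  then show ?thesis using eb ea eg unfolding P_def D_def DU_def by simp
qed

end
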